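(* Let $f\in{\rm elh}(\mathbb{C})$ be non-polynomial and $g\in{\rm elh}(\mathbb{C})$, suppose there is $h_1\in{\rm elh}(\mathbb{C})$ with $h_1\neq g$ and $f\circ h_1=f\circ g$, and let $t(z),h(z),L(w)$ be entire functions with $f(g(z)+we^{t(z)})=f(g(z))+e^{L(w)+h(z)}\sin\pi w$ for all $(z,w)\in\mathbb{C}^2$. Then for all $(z,w)\in\mathbb{C}^2$, $$(t'(z)-h'(z))f'(g(z)+we^{t(z)})+(g'(z)+wt'(z)e^{t(z)})f''(g(z)+we^{t(z)})=0.$$
   Context: ${\rm elh}(\mathbb{C})$ denotes the set of entire functions with nowhere vanishing derivative and derivative $1$ at $0$. *)

theory Defs
  imports "HOL-Complex_Analysis.Complex_Analysis" "HOL-Computational_Algebra.Polynomial"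
begin

definition elh :: "(complex \<Rightarrow> complex) set" where
  "elh = {f. f holomorphic_on UNIV \<and> (\<forall>z. deriv f z \<noteq> 0) \<and> deriv f 0 = 1}"

definition is_polynomial_fun :: "(complex \<Rightarrow> complex) \<Rightarrow> bool" where
  "is_polynomial_fun f \<longleftrightarrow> (\<exists>p :: complex poly. \<forall>z. f z = poly p z)"

end

theory Submission
  imports Defs
begin

lemma hol_der: "f holomorphic_on UNIV \<Longrightarrow> (f has_field_derivative deriv f x) (at x)"
  by (meson DERIV_deriv_iff_field_differentiable UNIV_I holomorphic_on_imp_differentiable_at open_UNIV)

theorem proposition3p32:
  fixes f g h1 t h L :: "complex \<Rightarrow> complex"
  assumes "f \<in> elh" and "\<not> is_polynomial_fun f" and "g \<in> elh"
    and "h1 \<in> elh" and "h1 \<noteq> g" and "f \<circ> h1 = f \<circ> g"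
    and "t holomorphic_on UNIV" and "h holomorphic_on UNIV" and "L holomorphic_on UNIV"
    and "\<And>z w. f (g z + w * exp (t z)) = f (g z) + exp (L w + h z) * sin (of_real pi * w)"
  shows "\<forall>z w. (deriv t z - deriv h z) * deriv f (g z + w * exp (t z))
      + (deriv g z + w * deriv t z * exp (t z)) * deriv (deriv f) (g z + w * exp (t z)) = 0"
proof (intro allI)
  fix z0 w0
  have fh: "f holomorphic_on UNIV" using assms(1) by (simp add: elh_def)
  have gh: "g holomorphic_on UNIV" using assms(3) by (simp add: elh_def)
  have f'h: "deriv f holomorphic_on UNIV" using fh by (simp add: holomorphic_deriv)
  define E where "E = (\<lambda>w. exp (L w) * sin (of_real pi * w))"
  have Eh: "E holomorphic_on UNIV" unfolding E_def using assms(9)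
    by (intro holomorphic_intros) auto
  define D where "D = deriv E w0"
  have step1: "deriv f (g z + w0 * exp (t z)) * exp (t z) = exp (h z) * D" for z
  proof -
    have d1: "((\<lambda>w. f (g z + w * exp (t z))) has_field_derivative
        deriv f (g z + w0 * exp (t z)) * exp (t z)) (at w0)"
    proof -
      have "((\<lambda>w. g z + w * exp (t z)) has_field_derivative exp (t z)) (at w0)"
        by (auto intro!: derivative_eq_intros)
      from DERIV_chain2[OF hol_der[OF fh] this] show ?thesis by simp
    qed
    have eq: "(\<lambda>w. f (g z + w * exp (t z))) = (\<lambda>w. f (g z) + exp (h z) * E w)"
      by (rule ext) (simp add: assms(10) E_def exp_add mult_ac)
    have d2: "((\<lambda>w. f (g z) + exp (h z) * E w) has_field_derivative exp (h z) * D) (at w0)"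
      unfolding D_def using hol_der[OF Eh, of w0]
      by (auto intro!: derivative_eq_intros)
    show ?thesis using d1 d2 eq DERIV_unique by metis
  qed
  define X where "X = (\<lambda>z. g z + w0 * exp (t z))"
  define \<phi> where "\<phi> = (\<lambda>z. deriv f (X z) * exp (t z - h z))"
  have const: "\<phi> z = D" for z
  proof -
    have "\<phi> z = deriv f (X z) * exp (t z) / exp (h z)"
      unfolding \<phi>_def by (simp add: exp_diff)
    also have "\<dots> = D" using step1[of z] by (simp add: X_def)
    finally show ?thesis .
  qed
  have d0: "(\<phi> has_field_derivative 0) (at z0)"
    using const by (metis DERIV_const ext)
  have dX: "(X has_field_derivative deriv g z0 + w0 * (deriv t z0 * exp (t z0))) (at z0)"
    unfolding X_def using hol_der[OF gh, of z0] hol_der[OF assms(7), of z0]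
    by (auto intro!: derivative_eq_intros)
  have dfX: "((\<lambda>z. deriv f (X z)) has_field_derivative
      deriv (deriv f) (X z0) * (deriv g z0 + w0 * (deriv t z0 * exp (t z0)))) (at z0)"
    using DERIV_chain2[OF hol_der[OF f'h] dX] .
  have dE: "((\<lambda>z. exp (t z - h z)) has_field_derivative
      exp (t z0 - h z0) * (deriv t z0 - deriv h z0)) (at z0)"
    using hol_der[OF assms(7), of z0] hol_der[OF assms(8), of z0]
    by (auto intro!: derivative_eq_intros)
  have d3: "(\<phi> has_field_derivative
      deriv (deriv f) (X z0) * (deriv g z0 + w0 * (deriv t z0 * exp (t z0))) * exp (t z0 - h z0)
      + exp (t z0 - h z0) * (deriv t z0 - deriv h z0) * deriv f (X z0)) (at z0)"
    unfolding \<phi>_def using DERIV_mult[OF dfX dE] .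
  have "exp (t z0 - h z0) * ((deriv t z0 - deriv h z0) * deriv f (X z0)
      + (deriv g z0 + w0 * deriv t z0 * exp (t z0)) * deriv (deriv f) (X z0)) = 0"
    using DERIV_unique[OF d3 d0] by (simp add: algebra_simps)
  then show "(deriv t z0 - deriv h z0) * deriv f (g z0 + w0 * exp (t z0))
      + (deriv g z0 + w0 * deriv t z0 * exp (t z0)) * deriv (deriv f) (g z0 + w0 * exp (t z0)) = 0"
    by (simp add: X_def)
qed

end
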